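(* Let $\mathcal A$ be a transitive Lie algebroid over $M$ with kernel $\mathcal L$. For every triple $(g,h,\nabla)$ where $g$ is a (possibly degenerate) metric on $M$, $h$ is a non-degenerate inner metric on $\mathcal L$ and $\nabla$ is an ordinary connection on $\mathcal A$ with connection 1-form $\omega$, the formula $$\widehat g(X,Y)=g(\rho(X),\rho(Y))+h(\omega(X),\omega(Y)),\qquad X,Y\in\mathcal A,$$ defines an inner non-degenerate metric on $\mathcal A$; and every inner non-degenerate metric $\widehat g$ on $\mathcal A$ arises in this way from exactly one such triple (so that inner non-degenerate metrics on $\mathcal A$ are equivalent to such triples).
   Context: A transitive Lie algebroid over $M$ is a finitely generated projective $C^\infty(M)$-module $\mathcal A$ with Lie bracket and surjective $C^\infty(M)$-linear Lie morphism $\rho:\mathcal A\to\Gamma(TM)$ with $[X,fY]=f[X,Y]+(\rho(X)f)Y$; its kernel $\mathcal L=\ker\rho=\Gamma(\mathbb L)$ for a locally trivial Lie algebra bundle $\mathbb L$; $\iota:\mathcal L\to\mathcal A$ is the inclusion. An inner metric on $\mathcal L$ is a metric $h$ on the vector bundle $\mathbb L$ (a symmetric $C^\infty(M)$-bilinear map $\mathcal L\otimes\mathcal L\to C^\infty(M)$). A metric on $\mathcal A$ is a symmetric $C^\infty(M)$-bilinear map $\widehat g:\mathcal A\otimes\mathcal A\to C^\infty(M)$; it is inner non-degenerate if $\iota^*\widehat g$, $(\gamma,\eta)\mapsto\widehat g(\iota\gamma,\iota\eta)$, is non-degenerate on $\mathbb L$. An ordinary connection is a $C^\infty(M)$-linear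 $\nabla:\Gamma(TM)\to\mathcal A$ with $\rho\circ\nabla=\mathrm{id}$; its connection 1-form $\omega:\mathcal A\to\mathcal L$ is defined by $X=\nabla_{\rho(X)}-\iota(\omega(X))$. *)

theory Defs
  imports "HOL-Analysis.Analysis"
begin

text \<open>The ring of smooth functions C-infinity(M) is modelled by an
  abstract commutative real algebra of type 'r; modules of sections are abelian groups
  with a scalar action (library locale module). Vector fields Gamma(TM) form a module
  of type 't with a bracket and an action on functions by derivations.\<close>

definition real_lie_algebra ::
  "('r::{comm_ring_1,real_algebra_1} \<Rightarrow> 'a::ab_group_add \<Rightarrow> 'a) \<Rightarrow> ('a \<Rightarrow> 'a \<Rightarrow> 'a) \<Rightarrow> bool" where
  "real_lie_algebra sc br \<longleftrightarrow>
     (\<forall>x y z. br (x + y) z = br x z + br y z) \<and>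
     (\<forall>c x y. br (sc (of_real c) x) y = sc (of_real c) (br x y)) \<and>
     (\<forall>x y. br x y = - br y x) \<and>
     (\<forall>x y z. br x (br y z) + br y (br z x) + br z (br x y) = 0)"

definition vector_field_structure ::
  "('r::{comm_ring_1,real_algebra_1} \<Rightarrow> 't::ab_group_add \<Rightarrow> 't) \<Rightarrow> ('t \<Rightarrow> 't \<Rightarrow> 't) \<Rightarrow> ('t \<Rightarrow> 'r \<Rightarrow> 'r) \<Rightarrow> bool" where
  "vector_field_structure sT brT act \<longleftrightarrow>
     module sT \<and> real_lie_algebra sT brT \<and>
     (\<forall>U f k. act U (f + k) = act U f + act U k) \<and>
     (\<forall>U f k. act U (f * k) = f * act U k + k * act U f) \<and>
     (\<forall>U c. act U (of_real c) = 0) \<and>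
     (\<forall>U V f. act (U + V) f = act U f + act V f) \<and>
     (\<forall>g U f. act (sT g U) f = g * act U f) \<and>
     (\<forall>U V f. act (brT U V) f = act U (act V f) - act V (act U f))"

definition fin_gen_projective :: "('r::comm_ring_1 \<Rightarrow> 'a::ab_group_add \<Rightarrow> 'a) \<Rightarrow> bool" where
  "fin_gen_projective sA \<longleftrightarrow>
     (\<exists>(n::nat) (e::nat \<Rightarrow> 'a) (\<phi>::nat \<Rightarrow> 'a \<Rightarrow> 'r).
        (\<forall>i<n. module_hom sA (\<lambda>r x. r * x) (\<phi> i)) \<and>
        (\<forall>X. X = (\<Sum>i<n. sA (\<phi> i X) (e i))))"

definition transitive_Lie_algebroid ::
  "('r::{comm_ring_1,real_algebra_1} \<Rightarrow> 'a::ab_group_add \<Rightarrow> 'a) \<Rightarrow> ('a \<Rightarrow> 'a \<Rightarrow> 'a) \<Rightarrow>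
   ('r \<Rightarrow> 't::ab_group_add \<Rightarrow> 't) \<Rightarrow> ('t \<Rightarrow> 't \<Rightarrow> 't) \<Rightarrow> ('t \<Rightarrow> 'r \<Rightarrow> 'r) \<Rightarrow>
   ('a \<Rightarrow> 't) \<Rightarrow> bool" where
  "transitive_Lie_algebroid sA brA sT brT act \<rho> \<longleftrightarrow>
     module sA \<and> fin_gen_projective sA \<and> real_lie_algebra sA brA \<and>
     vector_field_structure sT brT act \<and>
     module_hom sA sT \<rho> \<and> surj \<rho> \<and>
     (\<forall>X Y. \<rho> (brA X Y) = brT (\<rho> X) (\<rho> Y)) \<and>
     (\<forall>X f Y. brA X (sA f Y) = sA f (brA X Y) + sA (act (\<rho> X) f) Y)"

definition kernel_inclusion ::
  "('r::comm_ring_1 \<Rightarrow> 'l::ab_group_add \<Rightarrow> 'l) \<Rightarrow> ('r \<Rightarrow> 'a::ab_group_add \<Rightarrow> 'a) \<Rightarrow>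
   ('l \<Rightarrow> 'a) \<Rightarrow> ('a \<Rightarrow> 't::ab_group_add) \<Rightarrow> bool" where
  "kernel_inclusion sL sA \<iota> \<rho> \<longleftrightarrow>
     module_hom sL sA \<iota> \<and> inj \<iota> \<and> range \<iota> = {X. \<rho> X = 0}"

definition metric :: "('r::comm_ring_1 \<Rightarrow> 'a::ab_group_add \<Rightarrow> 'a) \<Rightarrow> ('a \<Rightarrow> 'a \<Rightarrow> 'r) \<Rightarrow> bool" where
  "metric sA g \<longleftrightarrow>
     (\<forall>X Y. g X Y = g Y X) \<and>
     (\<forall>X Y Z. g (X + Y) Z = g X Z + g Y Z) \<and>
     (\<forall>f X Y. g (sA f X) Y = f * g X Y)"

text \<open>Non-degeneracy of a metric on the bundle: the musical map gamma |-> h(gamma,-) is an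
  isomorphism from the module of sections onto its dual module.\<close>
definition nondegenerate :: "('r::comm_ring_1 \<Rightarrow> 'l::ab_group_add \<Rightarrow> 'l) \<Rightarrow> ('l \<Rightarrow> 'l \<Rightarrow> 'r) \<Rightarrow> bool" where
  "nondegenerate sL h \<longleftrightarrow>
     (\<forall>\<gamma>. (\<forall>\<eta>. h \<gamma> \<eta> = 0) \<longrightarrow> \<gamma> = 0) \<and>
     (\<forall>\<phi>. module_hom sL (\<lambda>r x. r * x) \<phi> \<longrightarrow> (\<exists>\<gamma>. \<forall>\<eta>. h \<gamma> \<eta> = \<phi> \<eta>))"

definition inner_nondegenerate ::
  "('r::comm_ring_1 \<Rightarrow> 'l::ab_group_add \<Rightarrow> 'l) \<Rightarrow> ('l \<Rightarrow> 'a) \<Rightarrow> ('a \<Rightarrow> 'a \<Rightarrow> 'r) \<Rightarrow> bool" where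
  "inner_nondegenerate sL \<iota> gh \<longleftrightarrow> nondegenerate sL (\<lambda>\<gamma> \<eta>. gh (\<iota> \<gamma>) (\<iota> \<eta>))"

definition ordinary_connection ::
  "('r::comm_ring_1 \<Rightarrow> 't::ab_group_add \<Rightarrow> 't) \<Rightarrow> ('r \<Rightarrow> 'a::ab_group_add \<Rightarrow> 'a) \<Rightarrow>
   ('a \<Rightarrow> 't) \<Rightarrow> ('t \<Rightarrow> 'a) \<Rightarrow> bool" where
  "ordinary_connection sT sA \<rho> nab \<longleftrightarrow> module_hom sT sA nab \<and> (\<forall>U. \<rho> (nab U) = U)"

definition connection_form :: "('l \<Rightarrow> 'a::ab_group_add) \<Rightarrow> ('a \<Rightarrow> 't) \<Rightarrow> ('t \<Rightarrow> 'a) \<Rightarrow> 'a \<Rightarrow> 'l" where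
  "connection_form \<iota> \<rho> nab X = (THE \<gamma>. X = nab (\<rho> X) - \<iota> \<gamma>)"

definition induced_metric ::
  "('l \<Rightarrow> 'a::ab_group_add) \<Rightarrow> ('a \<Rightarrow> 't) \<Rightarrow> ('t \<Rightarrow> 't \<Rightarrow> 'r::comm_ring_1) \<Rightarrow> ('l \<Rightarrow> 'l \<Rightarrow> 'r) \<Rightarrow>
   ('t \<Rightarrow> 'a) \<Rightarrow> 'a \<Rightarrow> 'a \<Rightarrow> 'r" where
  "induced_metric \<iota> \<rho> g h nab X Y =
     g (\<rho> X) (\<rho> Y) + h (connection_form \<iota> \<rho> nab X) (connection_form \<iota> \<rho> nab Y)"

end

theory Submission
  imports Defs
begin

lemma metric_add1: "metric s g \<Longrightarrow> g (X + Y) Z = g X Z + g Y Z" unfolding metric_def by blast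
lemma metric_sym: "metric s g \<Longrightarrow> g X Y = g Y X" unfolding metric_def by blast
lemma metric_scale1: "metric s g \<Longrightarrow> g (s f X) Y = f * g X Y" unfolding metric_def by blast
lemma metric_zero1: "metric s g \<Longrightarrow> g 0 Z = 0"
  using metric_add1[of s g 0 0 Z] by simp
lemma metric_zero2: "metric s g \<Longrightarrow> g Z 0 = 0"
  using metric_zero1 metric_sym by metis
lemma metric_minus1: "metric s g \<Longrightarrow> g (- X) Z = - g X Z"
  using metric_add1[of s g X "-X" Z] metric_zero1[of s g Z] by (simp add: eq_neg_iff_add_eq_0 add.commute)
lemma metric_diff1: "metric s g \<Longrightarrow> g (X - Y) Z = g X Z - g Y Z"
  using metric_add1[of s g X "-Y" Z] metric_minus1[of s g Y Z] by simp
lemma metric_add2: "metric s g \<Longrightarrow> g Z (X + Y) = g Z X + g Z Y"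
  using metric_add1 metric_sym by metis
lemma metric_diff2: "metric s g \<Longrightarrow> g Z (X - Y) = g Z X - g Z Y"
  using metric_diff1 metric_sym by metis
lemma metric_minus2: "metric s g \<Longrightarrow> g Z (- X) = - g Z X"
  using metric_minus1 metric_sym by metis

lemma cf_char:
  assumes ki: "kernel_inclusion sL sA \<iota> \<rho>" and mh: "module_hom sA sT \<rho>"
    and oc: "ordinary_connection sT sA \<rho> nab"
  shows "\<iota> (connection_form \<iota> \<rho> nab X) = nab (\<rho> X) - X"
proof -
  have inj: "inj \<iota>" and rng: "range \<iota> = {X. \<rho> X = 0}" using ki by (auto simp: kernel_inclusion_def)
  have "\<rho> (nab (\<rho> X) - X) = 0" using oc module_hom.diff[OF mh]
    by (simp add: ordinary_connection_def)
  then obtain \<gamma> where g: "\<iota> \<gamma> = nab (\<rho> X) - X" using rng by (metis (mono_tags, lifting) mem_Collect_eq rangeE)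
  have "connection_form \<iota> \<rho> nab X = \<gamma>"
    unfolding connection_form_def
  proof (rule the_equality)
    show "X = nab (\<rho> X) - \<iota> \<gamma>" using g by simp
    fix d assume "X = nab (\<rho> X) - \<iota> d"
    then have "\<iota> d = \<iota> \<gamma>" using g by (metis add_diff_cancel_left' diff_add_cancel)
    then show "d = \<gamma>" using inj by (simp add: inj_eq)
  qed
  then show ?thesis using g by simp
qed

lemma cf_scale:
  assumes ki: "kernel_inclusion sL sA \<iota> \<rho>" and mh: "module_hom sA sT \<rho>"
    and oc: "ordinary_connection sT sA \<rho> nab"
  shows "connection_form \<iota> \<rho> nab (sA f X) = sL f (connection_form \<iota> \<rho> nab X)"
proof -
  have inj: "inj \<iota>" and hi: "module_hom sL sA \<iota>" using ki by (auto simp: kernel_inclusion_def)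
  have hn: "module_hom sT sA nab" using oc by (simp add: ordinary_connection_def)
  have mA: "module sA" using mh by (simp add: module_hom_def)
  have "\<iota> (connection_form \<iota> \<rho> nab (sA f X)) = nab (\<rho> (sA f X)) - sA f X"
    by (rule cf_char[OF ki mh oc])
  also have "\<dots> = sA f (nab (\<rho> X) - X)"
    using module_hom.scale[OF mh] module_hom.scale[OF hn] module.scale_right_diff_distrib[OF mA] by simp
  also have "\<dots> = \<iota> (sL f (connection_form \<iota> \<rho> nab X))"
    using cf_char[OF ki mh oc, of X] module_hom.scale[OF hi] by simp
  finally show ?thesis using inj by (simp add: inj_eq)
qed

lemma cf_iota:
  assumes ki: "kernel_inclusion sL sA \<iota> \<rho>" and mh: "module_hom sA sT \<rho>"
    and oc: "ordinary_connection sT sA \<rho> nab"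
  shows "connection_form \<iota> \<rho> nab (\<iota> \<gamma>) = - \<gamma>"
proof -
  have inj: "inj \<iota>" and hi: "module_hom sL sA \<iota>" and rng: "range \<iota> = {X. \<rho> X = 0}"
    using ki by (auto simp: kernel_inclusion_def)
  have hn: "module_hom sT sA nab" using oc by (simp add: ordinary_connection_def)
  have r: "\<rho> (\<iota> \<gamma>) = 0" using rng by auto
  have "\<iota> (connection_form \<iota> \<rho> nab (\<iota> \<gamma>)) = nab 0 - \<iota> \<gamma>" using cf_char[OF ki mh oc] r by simp
  also have "\<dots> = \<iota> (- \<gamma>)" using module_hom.zero[OF hn] module_hom.neg[OF hi] by simp
  finally show ?thesis using inj by (simp add: inj_eq)
qed

lemma cf_nab:
  assumes ki: "kernel_inclusion sL sA \<iota> \<rho>" and mh: "module_hom sA sT \<rho>"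
    and oc: "ordinary_connection sT sA \<rho> nab"
  shows "connection_form \<iota> \<rho> nab (nab U) = 0"
proof -
  have inj: "inj \<iota>" and hi: "module_hom sL sA \<iota>" using ki by (auto simp: kernel_inclusion_def)
  have "\<iota> (connection_form \<iota> \<rho> nab (nab U)) = 0" using cf_char[OF ki mh oc] oc
    by (simp add: ordinary_connection_def)
  then show ?thesis using inj module_hom.zero[OF hi] by (metis injD)
qed

lemma cf_add:
  assumes ki: "kernel_inclusion sL sA \<iota> \<rho>" and mh: "module_hom sA sT \<rho>"
    and oc: "ordinary_connection sT sA \<rho> nab"
  shows "connection_form \<iota> \<rho> nab (X + Y) = connection_form \<iota> \<rho> nab X + connection_form \<iota> \<rho> nab Y"
proof -
  have inj: "inj \<iota>" and hi: "module_hom sL sA \<iota>" using ki by (auto simp: kernel_inclusion_def)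
  have hn: "module_hom sT sA nab" using oc by (simp add: ordinary_connection_def)
  have "\<iota> (connection_form \<iota> \<rho> nab (X + Y)) = nab (\<rho> (X+Y)) - (X + Y)" by (rule cf_char[OF ki mh oc])
  also have "\<dots> = (nab (\<rho> X) - X) + (nab (\<rho> Y) - Y)"
    using module_hom.add[OF mh] module_hom.add[OF hn] by (simp add: algebra_simps)
  also have "\<dots> = \<iota> (connection_form \<iota> \<rho> nab X + connection_form \<iota> \<rho> nab Y)"
    using cf_char[OF ki mh oc] module_hom.add[OF hi] by simp
  finally show ?thesis using inj by (simp add: inj_eq)
qed

lemma induced_iota:
  assumes ki: "kernel_inclusion sL sA \<iota> \<rho>" and mh: "module_hom sA sT \<rho>"
    and oc: "ordinary_connection sT sA \<rho> nab" and mg: "metric sT g" and mhh: "metric sL h"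
  shows "induced_metric \<iota> \<rho> g h nab (\<iota> a) (\<iota> b) = h a b"
proof -
  have rng: "range \<iota> = {X. \<rho> X = 0}" using ki by (auto simp: kernel_inclusion_def)
  have "\<rho> (\<iota> a) = 0" "\<rho> (\<iota> b) = 0" using rng by auto
  then show ?thesis unfolding induced_metric_def
    using cf_iota[OF ki mh oc] metric_zero1[OF mg] metric_minus1[OF mhh] metric_minus2[OF mhh] by simp
qed

lemma part1:
  assumes ki: "kernel_inclusion sL sA \<iota> \<rho>" and mh: "module_hom sA sT \<rho>"
    and oc: "ordinary_connection sT sA \<rho> nab" and mg: "metric sT g" and mhh: "metric sL h"
    and nd: "nondegenerate sL h"
  shows "metric sA (induced_metric \<iota> \<rho> g h nab) \<and> inner_nondegenerate sL \<iota> (induced_metric \<iota> \<rho> g h nab)"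
proof
  show "metric sA (induced_metric \<iota> \<rho> g h nab)"
    unfolding metric_def induced_metric_def
    using metric_sym[OF mg] metric_sym[OF mhh] metric_add1[OF mg] metric_add1[OF mhh]
      metric_scale1[OF mg] metric_scale1[OF mhh] module_hom.add[OF mh] module_hom.scale[OF mh]
      cf_add[OF ki mh oc] cf_scale[OF ki mh oc]
    by (simp add: algebra_simps)
  show "inner_nondegenerate sL \<iota> (induced_metric \<iota> \<rho> g h nab)"
    unfolding inner_nondegenerate_def using induced_iota[OF ki mh oc mg mhh] nd by simp
qed

theorem proposition2p7:
  fixes sA :: "'r::{comm_ring_1,real_algebra_1} \<Rightarrow> 'a::ab_group_add \<Rightarrow> 'a"
    and brA :: "'a \<Rightarrow> 'a \<Rightarrow> 'a"
    and sT :: "'r \<Rightarrow> 't::ab_group_add \<Rightarrow> 't"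
    and brT :: "'t \<Rightarrow> 't \<Rightarrow> 't"
    and act :: "'t \<Rightarrow> 'r \<Rightarrow> 'r"
    and \<rho> :: "'a \<Rightarrow> 't"
    and sL :: "'r \<Rightarrow> 'l::ab_group_add \<Rightarrow> 'l"
    and \<iota> :: "'l \<Rightarrow> 'a"
  assumes "transitive_Lie_algebroid sA brA sT brT act \<rho>"
    and "kernel_inclusion sL sA \<iota> \<rho>"
  shows "(\<forall>g h nab. metric sT g \<and> metric sL h \<and> nondegenerate sL h \<and>
            ordinary_connection sT sA \<rho> nab \<longrightarrow>
            metric sA (induced_metric \<iota> \<rho> g h nab) \<and>
            inner_nondegenerate sL \<iota> (induced_metric \<iota> \<rho> g h nab)) \<and>
         (\<forall>gh. metric sA gh \<and> inner_nondegenerate sL \<iota> gh \<longrightarrow>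
            (\<exists>!(g, h, nab). metric sT g \<and> metric sL h \<and> nondegenerate sL h \<and>
               ordinary_connection sT sA \<rho> nab \<and> gh = induced_metric \<iota> \<rho> g h nab))"
proof -
  have TL: "transitive_Lie_algebroid sA brA sT brT act \<rho>" and ki: "kernel_inclusion sL sA \<iota> \<rho>" using assms by auto
  have mh: "module_hom sA sT \<rho>" and sj: "surj \<rho>" and mA: "module sA" and mT: "module sT"
    using TL by (auto simp: transitive_Lie_algebroid_def module_hom_def)
  have hi: "module_hom sL sA \<iota>" and inj: "inj \<iota>" and rng: "range \<iota> = {X. \<rho> X = 0}"
    using ki by (auto simp: kernel_inclusion_def)
  have mL: "module sL" using hi by (simp add: module_hom_def)
  have mR: "module (\<lambda>r (x::'r). r * x)" by unfold_locales (auto simp: algebra_simps)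
  show ?thesis
  proof (intro conjI allI impI)
    fix g h nab assume "metric sT g \<and> metric sL h \<and> nondegenerate sL h \<and> ordinary_connection sT sA \<rho> nab"
    then show "metric sA (induced_metric \<iota> \<rho> g h nab)"
      using part1[OF ki mh] by blast
  next
    fix g h nab assume "metric sT g \<and> metric sL h \<and> nondegenerate sL h \<and> ordinary_connection sT sA \<rho> nab"
    then show "inner_nondegenerate sL \<iota> (induced_metric \<iota> \<rho> g h nab)"
      using part1[OF ki mh] by blast
  next
    fix gh assume a: "metric sA gh \<and> inner_nondegenerate sL \<iota> gh"
    then have mg: "metric sA gh" and nd: "nondegenerate sL (\<lambda>a b. gh (\<iota> a) (\<iota> b))"
      by (auto simp: inner_nondegenerate_def)
    define h0 where "h0 = (\<lambda>a b. gh (\<iota> a) (\<iota> b))"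
    define orth where "orth = (\<lambda>Y. \<forall>\<eta>. gh Y (\<iota> \<eta>) = 0)"
    have ex: "\<exists>Y. \<rho> Y = U \<and> orth Y" for U
    proof -
      obtain X where X: "\<rho> X = U" using sj by (metis surjD)
      have "module_hom sL (\<lambda>r x. r * x) (\<lambda>\<eta>. gh X (\<iota> \<eta>))"
        unfolding module_hom_def module_hom_axioms_def
        using mL mR module_hom.add[OF hi] module_hom.scale[OF hi] metric_add2[OF mg]
          metric_sym[OF mg] metric_scale1[OF mg] by metis
      then obtain \<gamma> where g: "\<forall>\<eta>. gh (\<iota> \<gamma>) (\<iota> \<eta>) = gh X (\<iota> \<eta>)"
        using nd unfolding nondegenerate_def by blast
      have "\<rho> (\<iota> \<gamma>) = 0" using rng by auto
      then have "\<rho> (X - \<iota> \<gamma>) = U" using X module_hom.diff[OF mh] by simp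
      moreover have "orth (X - \<iota> \<gamma>)" unfolding orth_def using g metric_diff1[OF mg] by simp
      ultimately show ?thesis by blast
    qed
    have un: "Y = Y'" if "\<rho> Y = \<rho> Y'" "orth Y" "orth Y'" for Y Y'
    proof -
      have "\<rho> (Y - Y') = 0" using that module_hom.diff[OF mh] by simp
      then obtain \<gamma> where g: "\<iota> \<gamma> = Y - Y'" using rng by (metis (mono_tags, lifting) mem_Collect_eq rangeE)
      have "\<forall>\<eta>. gh (\<iota> \<gamma>) (\<iota> \<eta>) = 0" using g that(2,3) metric_diff1[OF mg] unfolding orth_def by simp
      then have "\<gamma> = 0" using nd unfolding nondegenerate_def by blast
      then show ?thesis using g module_hom.zero[OF hi] by simp
    qed
    define nab0 where "nab0 = (\<lambda>U. SOME Y. \<rho> Y = U \<and> orth Y)"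
    have n0: "\<rho> (nab0 U) = U \<and> orth (nab0 U)" for U
      unfolding nab0_def using ex[of U] by (rule someI_ex)
    have n0u: "nab0 U = Y" if "\<rho> Y = U" "orth Y" for U Y
      using un n0 that by metis
    define g0 where "g0 = (\<lambda>U V. gh (nab0 U) (nab0 V))"
    have oc: "ordinary_connection sT sA \<rho> nab0"
      unfolding ordinary_connection_def module_hom_def module_hom_axioms_def
    proof (intro conjI allI mT mA)
      fix U V show "nab0 (U + V) = nab0 U + nab0 V"
        apply (rule n0u)
        using n0[of U] n0[of V] module_hom.add[OF mh] metric_add1[OF mg] unfolding orth_def by auto
    next
      fix c U show "nab0 (sT c U) = sA c (nab0 U)"
        apply (rule n0u)
        using n0[of U] module_hom.scale[OF mh] metric_scale1[OF mg] unfolding orth_def by auto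
    next
      fix U show "\<rho> (nab0 U) = U" using n0 by blast
    qed
    have hn: "module_hom sT sA nab0" using oc by (simp add: ordinary_connection_def)
    have mg0: "metric sT g0" unfolding metric_def g0_def
      using metric_sym[OF mg] metric_add1[OF mg] metric_scale1[OF mg] module_hom.add[OF hn]
        module_hom.scale[OF hn] by simp
    have mh0: "metric sL h0" unfolding metric_def h0_def
      using metric_sym[OF mg] metric_add1[OF mg] metric_scale1[OF mg] module_hom.add[OF hi]
        module_hom.scale[OF hi] by simp
    have nd0: "nondegenerate sL h0" using nd h0_def by simp
    have o1: "gh (nab0 U) (\<iota> a) = 0" for U a using n0 orth_def by blast
    have o2: "gh (\<iota> a) (nab0 U) = 0" for U a using o1 metric_sym[OF mg] by metis
    have eq: "gh = induced_metric \<iota> \<rho> g0 h0 nab0"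
    proof (intro ext)
      fix X Y
      have X: "X = nab0 (\<rho> X) - \<iota> (connection_form \<iota> \<rho> nab0 X)" using cf_char[OF ki mh oc, of X] by simp
      have Y: "Y = nab0 (\<rho> Y) - \<iota> (connection_form \<iota> \<rho> nab0 Y)" using cf_char[OF ki mh oc, of Y] by simp
      have "gh X Y = gh (nab0 (\<rho> X) - \<iota> (connection_form \<iota> \<rho> nab0 X)) (nab0 (\<rho> Y) - \<iota> (connection_form \<iota> \<rho> nab0 Y))"
        using X Y by simp
      also have "\<dots> = induced_metric \<iota> \<rho> g0 h0 nab0 X Y"
        unfolding induced_metric_def g0_def h0_def
        using metric_diff1[OF mg] metric_diff2[OF mg] o1 o2 by simp
      finally show "gh X Y = induced_metric \<iota> \<rho> g0 h0 nab0 X Y" .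
    qed
    have uniq: "(g, h, nab) = (g0, h0, nab0)"
      if H: "metric sT g" "metric sL h" "nondegenerate sL h" "ordinary_connection sT sA \<rho> nab"
         "gh = induced_metric \<iota> \<rho> g h nab" for g h nab
    proof -
      have hh: "h = h0" unfolding h0_def using induced_iota[OF ki mh H(4) H(1) H(2)] H(5) by simp
      have rn: "\<rho> (nab U) = U" for U using H(4) by (simp add: ordinary_connection_def)
      have nn: "nab = nab0"
      proof
        fix U
        have "orth (nab U)" unfolding orth_def
        proof
          fix e have "\<rho> (\<iota> e) = 0" using rng by auto
          then show "gh (nab U) (\<iota> e) = 0" using H(5) cf_nab[OF ki mh H(4)]
            metric_zero2[OF H(1)] metric_zero1[OF H(2)] by (simp add: induced_metric_def)
        qed
        then show "nab U = nab0 U" using n0u rn by metis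
      qed
      have gg: "g = g0"
      proof (intro ext)
        fix U V show "g U V = g0 U V" using H(5) nn rn cf_nab[OF ki mh H(4)] metric_zero1[OF H(2)]
          by (simp add: induced_metric_def g0_def)
      qed
      show ?thesis using hh nn gg by simp
    qed
    show "\<exists>!(g, h, nab). metric sT g \<and> metric sL h \<and> nondegenerate sL h \<and>
               ordinary_connection sT sA \<rho> nab \<and> gh = induced_metric \<iota> \<rho> g h nab"
      apply (rule ex1I[of _ "(g0, h0, nab0)"])
      using mg0 mh0 nd0 oc eq uniq by auto
  qed
qed

end
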